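(* Let $S$ be an inverse semigroup with zero. Two distinct non-zero elements $x,y\in S$ are adjacent in $\mathcal{P}_L(S)$ if and only if $xy^{-1}\neq 0$.
   Context: For an inverse semigroup $S$, $x^{-1}$ denotes the unique inverse of $x$ (the unique $y$ with $xyx=x$, $yxy=y$). For $a\in S$, $S^1a=\{sa:s\in S\}\cup\{a\}$. $\mathcal{P}_L(S)$ is the simple graph whose vertices are the non-zero elements of $S$, two distinct vertices $a,b$ being adjacent iff $S^1a\cap S^1b$ contains an element different from $0$. *)

theory Defs
  imports Main
begin

text \<open>An inverse semigroup with zero: a semigroup with a two-sided zero in which
every element x has a unique y with x*y*x = x and y*x*y = y. The semigroup S
is the whole carrier type.\<close>

class inverse_semigroup_zero = semigroup_mult + mult_zero +
  assumes unique_inverse: "\<exists>!y. x * y * x = x \<and> y * x * y = y"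

definition sinv :: "'a::inverse_semigroup_zero \<Rightarrow> 'a" where
  "sinv x = (THE y. x * y * x = x \<and> y * x * y = y)"

definition S1_left :: "'a::inverse_semigroup_zero \<Rightarrow> 'a set" where
  "S1_left a = {s * a | s. True} \<union> {a}"

definition PL_adj :: "'a::inverse_semigroup_zero \<Rightarrow> 'a \<Rightarrow> bool" where
  "PL_adj a b \<longleftrightarrow> a \<noteq> 0 \<and> b \<noteq> 0 \<and> a \<noteq> b \<and>
     (\<exists>c \<in> S1_left a \<inter> S1_left b. c \<noteq> 0)"

end

theory Submission
  imports Defs
begin

lemma sinv_props: fixes x :: "'a::inverse_semigroup_zero"
  shows "x * sinv x * x = x \<and> sinv x * x * sinv x = sinv x"
  unfolding sinv_def by (rule theI', rule unique_inverse)

lemma inv_uniq: fixes x y z :: "'a::inverse_semigroup_zero"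
  assumes "x * y * x = x" "y * x * y = y" "x * z * x = x" "z * x * z = z"
  shows "y = z"
  using unique_inverse[of x] assms by blast

lemma idem_mult_idem: fixes e f :: "'a::inverse_semigroup_zero"
  assumes e: "e * e = e" and f: "f * f = f"
  shows "(e * f) * (e * f) = e * f"
proof -
  obtain z where z1: "(e*f) * z * (e*f) = e*f" and z2: "z * (e*f) * z = z"
    using unique_inverse[of "e*f"] by blast
  have a: "(e*f) * (f*z*e) * (e*f) = e*f"
    using z1 e f by (simp add: mult.assoc) (metis mult.assoc)
  have b: "(f*z*e) * (e*f) * (f*z*e) = f*z*e"
    using z2 e f by (simp add: mult.assoc) (metis mult.assoc)
  have zz: "z = f*z*e" using inv_uniq[OF z1 z2 a b] .
  have zi: "z * z = z"
  proof -
    have "z * z = (f*z*e) * (f*z*e)" using zz by simp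
    also have "\<dots> = f * (z * (e*f) * z) * e" by (simp add: mult.assoc)
    also have "\<dots> = z" using z2 zz by simp
    finally show ?thesis .
  qed
  have "z = e * f"
    using inv_uniq[of z z "e*f"] zi z1 z2 by (metis mult.assoc)
  then show ?thesis using zi by simp
qed

lemma idem_comm: fixes e f :: "'a::inverse_semigroup_zero"
  assumes e: "e * e = e" and f: "f * f = f"
  shows "e * f = f * e"
proof -
  have ef: "(e*f)*(e*f) = e*f" by (rule idem_mult_idem[OF e f])
  have fe: "(f*e)*(f*e) = f*e" by (rule idem_mult_idem[OF f e])
  have 1: "(e*f)*(e*f)*(e*f) = e*f" using ef by simp
  have 2: "(e*f)*(f*e)*(e*f) = e*f"
  proof -
    have "(e*f)*(f*e)*(e*f) = e*(f*f)*(e*e)*f" by (simp add: mult.assoc)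
    also have "\<dots> = (e*f)*(e*f)" using e f by (simp add: mult.assoc)
    finally show ?thesis using ef by simp
  qed
  have 3: "(f*e)*(e*f)*(f*e) = f*e"
  proof -
    have "(f*e)*(e*f)*(f*e) = f*(e*e)*(f*f)*e" by (simp add: mult.assoc)
    also have "\<dots> = (f*e)*(f*e)" using e f by (simp add: mult.assoc)
    finally show ?thesis using fe by simp
  qed
  show ?thesis using inv_uniq[OF 1 1 2 3] by simp
qed

lemma S1_fix: fixes a c :: "'a::inverse_semigroup_zero"
  assumes "c \<in> S1_left a" shows "c = c * sinv a * a"
proof -
  have p: "a * sinv a * a = a" using sinv_props by blast
  from assms obtain s where "c = s * a \<or> c = a" unfolding S1_left_def by blast
  then show ?thesis using p by (metis mult.assoc)
qed

theorem mainTheorem10: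
  fixes x y :: "'a::inverse_semigroup_zero"
  assumes "x \<noteq> 0" and "y \<noteq> 0" and "x \<noteq> y"
  shows "PL_adj x y \<longleftrightarrow> x * sinv y \<noteq> 0"
proof
  assume "PL_adj x y"
  then obtain c where cx: "c \<in> S1_left x" and cy: "c \<in> S1_left y" and c0: "c \<noteq> 0"
    unfolding PL_adj_def by blast
  show "x * sinv y \<noteq> 0"
  proof
    assume h: "x * sinv y = 0"
    have "c = c * sinv x * x * sinv y * y"
      using S1_fix[OF cx] S1_fix[OF cy] by (metis mult.assoc)
    also have "\<dots> = 0" using h by (simp add: mult.assoc)
    finally show False using c0 by simp
  qed
next
  assume h: "x * sinv y \<noteq> 0"
  have px: "x * sinv x * x = x" "sinv x * x * sinv x = sinv x" using sinv_props by blast+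
  have py: "y * sinv y * y = y" "sinv y * y * sinv y = sinv y" using sinv_props by blast+
  have ex: "(sinv x * x) * (sinv x * x) = sinv x * x" using px by (metis mult.assoc)
  have ey: "(sinv y * y) * (sinv y * y) = sinv y * y" using py by (metis mult.assoc)
  have com: "sinv x * x * (sinv y * y) = sinv y * y * (sinv x * x)"
    using idem_comm[OF ex ey] by (simp add: mult.assoc)
  define c where "c = x * sinv y * y"
  have c0: "c \<noteq> 0"
  proof
    assume "c = 0"
    then have "x * sinv y = c * sinv y" using py unfolding c_def by (metis mult.assoc)
    then show False using h \<open>c = 0\<close> by simp
  qed
  have cy: "c \<in> S1_left y" unfolding c_def S1_left_def by blast
  have "c = (x * sinv y * y * sinv x) * x"
  proof -
    have "c = x * sinv x * x * (sinv y * y)" using px unfolding c_def by (simp add: mult.assoc)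
    also have "\<dots> = x * (sinv x * x * (sinv y * y))" by (simp add: mult.assoc)
    also have "\<dots> = x * (sinv y * y * (sinv x * x))" using com by simp
    finally show ?thesis by (simp add: mult.assoc)
  qed
  then have cx: "c \<in> S1_left x" unfolding S1_left_def by blast
  show "PL_adj x y" unfolding PL_adj_def using assms c0 cx cy by blast
qed

end
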